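(* Let $n\ge1$ and $p$ a prime. For $m\ge1$ let $Y_m$ be the subspace of $\Sigma(n,p)$ spanned by all $\overline{B}_q$ where $q$ has at least $m$ components, and let $\mathcal{T}$ be the subspace of $\Sigma(n,p)$ spanned by all $\overline{B}_q-\overline{B}_r$ with $q\approx r$. Then: (1) if $n$ is odd or $p\ne2$, then $\mathcal{R}(n,p)\subseteq (Y_2\cap\mathcal{T})+Y_3$; (2) if $n$ is even and $p=2$, then $\mathcal{R}(n,p)\subseteq \langle\overline{B}_{[n/2,n/2]}\rangle+(Y_2\cap\mathcal{T})+Y_3$.
   Context: A composition of $n$ is a sequence of positive integers with sum $n$; $q\approx r$ means $r$ is a reordering of the components of $q$. The descent algebra $\Sigma_n$ has basis $\{B_q\}$ indexed by compositions of $n$ with multiplication $B_qB_r=\sum_{Z\in S(q,r)}B_{c(Z)}$, where for $q=[a_1,\dots,a_s]$, $r=[b_1,\dots,b_t]$, $S(q,r)$ is the set of $s\times t$ non-negative integer matrices with row sums $a_i$ and column sums $b_j$, and $c(Z)$ is the composition obtained by reading the entries of $Z$ row by row and omitting zeros. Let $\mathcal{Z}_n$ be the subring of integral combinations of the $B_q$ and $\Sigma(n,p)=\mathcal{Z}_n/p\mathcal{Z}_n$, an $\mathbb{F}_p$-algebra with basis $\overline{B}_q$ (images of $B_q$); $\mathcal{R}(n,p)$ denotes its (Jacobson) radical. *)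

theory Defs
  imports Main "HOL-Library.Multiset" "HOL-Computational_Algebra.Primes"
begin

definition comps :: "nat \<Rightarrow> nat list set" where
  "comps n = {q. (\<forall>x\<in>set q. 0 < x) \<and> sum_list q = n}"

definition Smat :: "nat list \<Rightarrow> nat list \<Rightarrow> (nat \<Rightarrow> nat \<Rightarrow> nat) set" where
  "Smat q r = {Z. (\<forall>i j. (length q \<le> i \<or> length r \<le> j) \<longrightarrow> Z i j = 0)
     \<and> (\<forall>i<length q. (\<Sum>j<length r. Z i j) = q ! i)
     \<and> (\<forall>j<length r. (\<Sum>i<length q. Z i j) = r ! j)}"

definition cZ :: "nat \<Rightarrow> nat \<Rightarrow> (nat \<Rightarrow> nat \<Rightarrow> nat) \<Rightarrow> nat list" where
  "cZ s t Z = filter (\<lambda>x. x \<noteq> 0) (concat (map (\<lambda>i. map (\<lambda>j. Z i j) [0..<t]) [0..<s]))"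

text \<open>Structure constant: coefficient of B_u in B_q B_r.\<close>
definition Bcoeff :: "nat list \<Rightarrow> nat list \<Rightarrow> nat list \<Rightarrow> nat" where
  "Bcoeff q r u = card {Z \<in> Smat q r. cZ (length q) (length r) Z = u}"

text \<open>Sigma(n,p): an element is its coefficient vector w.r.t. the basis
  (images of B_q, q a composition of n), coefficients in {0..p-1} = F_p.\<close>
definition Sig :: "nat \<Rightarrow> nat \<Rightarrow> (nat list \<Rightarrow> int) set" where
  "Sig n p = {f. (\<forall>q. q \<notin> comps n \<longrightarrow> f q = 0) \<and> (\<forall>q. 0 \<le> f q \<and> f q < int p)}"

definition sadd :: "nat \<Rightarrow> (nat list \<Rightarrow> int) \<Rightarrow> (nat list \<Rightarrow> int) \<Rightarrow> (nat list \<Rightarrow> int)" where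
  "sadd p f g = (\<lambda>q. (f q + g q) mod int p)"

definition sneg :: "nat \<Rightarrow> (nat list \<Rightarrow> int) \<Rightarrow> (nat list \<Rightarrow> int)" where
  "sneg p f = (\<lambda>q. (- f q) mod int p)"

definition smul :: "nat \<Rightarrow> nat \<Rightarrow> (nat list \<Rightarrow> int) \<Rightarrow> (nat list \<Rightarrow> int) \<Rightarrow> (nat list \<Rightarrow> int)" where
  "smul n p f g = (\<lambda>u. (\<Sum>q\<in>comps n. \<Sum>r\<in>comps n. f q * g r * int (Bcoeff q r u)) mod int p)"

definition Bbar :: "nat \<Rightarrow> nat list \<Rightarrow> (nat list \<Rightarrow> int)" where
  "Bbar p q = (\<lambda>s. if s = q then 1 mod int p else 0)"

definition lideal :: "nat \<Rightarrow> nat \<Rightarrow> (nat list \<Rightarrow> int) set \<Rightarrow> bool" where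
  "lideal n p I \<longleftrightarrow> I \<subseteq> Sig n p \<and> (\<lambda>_. 0) \<in> I
     \<and> (\<forall>x\<in>I. \<forall>y\<in>I. sadd p x y \<in> I) \<and> (\<forall>x\<in>I. sneg p x \<in> I)
     \<and> (\<forall>a\<in>Sig n p. \<forall>x\<in>I. smul n p a x \<in> I)"

definition max_lideal :: "nat \<Rightarrow> nat \<Rightarrow> (nat list \<Rightarrow> int) set \<Rightarrow> bool" where
  "max_lideal n p I \<longleftrightarrow> lideal n p I \<and> I \<noteq> Sig n p
     \<and> (\<forall>J. lideal n p J \<and> I \<subseteq> J \<longrightarrow> J = I \<or> J = Sig n p)"

definition rad :: "nat \<Rightarrow> nat \<Rightarrow> (nat list \<Rightarrow> int) set" where
  "rad n p = Sig n p \<inter> \<Inter> {I. max_lideal n p I}"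

definition lincomb :: "nat \<Rightarrow> ((nat list \<Rightarrow> int) \<Rightarrow> int) \<Rightarrow> (nat list \<Rightarrow> int) set \<Rightarrow> (nat list \<Rightarrow> int)" where
  "lincomb p c F = (\<lambda>q. (\<Sum>v\<in>F. c v * v q) mod int p)"

definition span_p :: "nat \<Rightarrow> (nat list \<Rightarrow> int) set \<Rightarrow> (nat list \<Rightarrow> int) set" where
  "span_p p S = {lincomb p c F | c F. finite F \<and> F \<subseteq> S}"

definition ssum :: "nat \<Rightarrow> (nat list \<Rightarrow> int) set \<Rightarrow> (nat list \<Rightarrow> int) set \<Rightarrow> (nat list \<Rightarrow> int) set" where
  "ssum p U V = {sadd p u v | u v. u \<in> U \<and> v \<in> V}"

definition Ysp :: "nat \<Rightarrow> nat \<Rightarrow> nat \<Rightarrow> (nat list \<Rightarrow> int) set" where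
  "Ysp n p m = span_p p {Bbar p q | q. q \<in> comps n \<and> m \<le> length q}"

definition Tsp :: "nat \<Rightarrow> nat \<Rightarrow> (nat list \<Rightarrow> int) set" where
  "Tsp n p = span_p p {sadd p (Bbar p q) (sneg p (Bbar p r)) | q r.
      q \<in> comps n \<and> r \<in> comps n \<and> mset q = mset r}"

end

theory Submission
  imports Defs
begin


lemma sum_list_upt_nat: "sum_list (map f [0..<k]) = (\<Sum>i<k. (f i::nat))"
  by (induction k) auto

lemma sum_list_concat_nat: "sum_list (concat xss) = sum_list (map sum_list (xss::nat list list))"
  by (induction xss) auto

lemma sum_list_filter_nz: "sum_list (filter (\<lambda>x. x \<noteq> 0) xs) = sum_list (xs::nat list)"
  by (induction xs) auto

lemma comps_finite: "finite (comps n)"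
proof -
  have "comps n \<subseteq> {xs. set xs \<subseteq> {0..n} \<and> length xs \<le> n}"
  proof
    fix q assume q: "q \<in> comps n"
    hence pos: "\<forall>x\<in>set q. 0 < x" and s: "sum_list q = n" by (auto simp: comps_def)
    have "length q \<le> sum_list q" using pos by (induction q) auto
    moreover have "set q \<subseteq> {0..n}" using s member_le_sum_list by fastforce
    ultimately show "q \<in> {xs. set xs \<subseteq> {0..n} \<and> length xs \<le> n}" using s by auto
  qed
  thus ?thesis using finite_lists_length_le[of "{0..n}" n] finite_subset by blast
qed

lemma comps_ne: "q \<in> comps n \<Longrightarrow> 1 \<le> n \<Longrightarrow> 1 \<le> length q"
  by (cases q) (auto simp: comps_def)

lemma comps_len1: "q \<in> comps n \<Longrightarrow> length q = 1 \<Longrightarrow> q = [n]"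
  by (cases q) (auto simp: comps_def)

lemma len2: "length xs = 2 \<Longrightarrow> \<exists>a b. xs = [a,b]"
  by (cases xs; cases "tl xs") auto

lemma Smat_le: assumes "q \<in> comps n" "Z \<in> Smat q r" shows "Z i j \<le> n"
proof (cases "i < length q \<and> j < length r")
  case True
  have "Z i j \<le> (\<Sum>j<length r. Z i j)" using True by (intro member_le_sum) auto
  also have "\<dots> = q ! i" using assms True by (auto simp: Smat_def)
  also have "\<dots> \<le> n" using assms True elem_le_sum_list[of i q] by (auto simp: comps_def)
  finally show ?thesis .
next
  case False thus ?thesis using assms by (auto simp: Smat_def)
qed

lemma Smat_finite: assumes "q \<in> comps n" shows "finite (Smat q r)"
proof -
  let ?A = "{..<length q} \<times> {..<length r}"
  let ?S = "{f. \<forall>x. (x \<in> ?A \<longrightarrow> f x \<in> {..n}) \<and> (x \<notin> ?A \<longrightarrow> f x = (0::nat))}"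
  have "finite ?S" by (rule finite_set_of_finite_funs) auto
  moreover have "Smat q r \<subseteq> curry ` ?S"
  proof
    fix Z assume Z: "Z \<in> Smat q r"
    have "Z = curry (case_prod Z)" by simp
    moreover have "case_prod Z \<in> ?S" using Z Smat_le[OF assms Z] by (auto simp: Smat_def)
    ultimately show "Z \<in> curry ` ?S" by blast
  qed
  ultimately show ?thesis using finite_subset by blast
qed

lemma sum_cZ: "sum_list (cZ s t Z) = (\<Sum>i<s. \<Sum>j<t. Z i j)"
  unfolding cZ_def sum_list_filter_nz sum_list_concat_nat map_map
  by (simp add: o_def sum_list_upt_nat)

lemma cZ_comps: assumes "q \<in> comps n" "Z \<in> Smat q r"
  shows "cZ (length q) (length r) Z \<in> comps n"
proof -
  have "(\<Sum>i<length q. \<Sum>j<length r. Z i j) = (\<Sum>i<length q. q ! i)"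
    using assms(2) by (auto simp: Smat_def)
  also have "\<dots> = n" using assms(1) by (simp add: comps_def sum_list_sum_nth atLeast0LessThan)
  finally have "(\<Sum>i<length q. \<Sum>j<length r. Z i j) = n" .
  hence "sum_list (cZ (length q) (length r) Z) = n" by (simp add: sum_cZ)
  moreover have "\<forall>x\<in>set (cZ (length q) (length r) Z). 0 < x" by (auto simp: cZ_def)
  ultimately show ?thesis by (simp add: comps_def)
qed

lemma len_cZ: "length (cZ s t Z) = card (SIGMA i:{..<s}. {j. j<t \<and> Z i j \<noteq> 0})"
proof -
  have "length (cZ s t Z) = (\<Sum>i<s. length (filter (\<lambda>x. x \<noteq> 0) (map (Z i) [0..<t])))"
    unfolding cZ_def filter_concat length_concat map_map by (simp add: o_def sum_list_upt_nat)
  also have "\<dots> = (\<Sum>i<s. card {j. j<t \<and> Z i j \<noteq> 0})"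
  proof (intro sum.cong refl)
    fix i
    have "length (filter (\<lambda>x. x \<noteq> 0) (map (Z i) [0..<t])) = length (filter (\<lambda>j. Z i j \<noteq> 0) [0..<t])"
      by (simp add: filter_map o_def)
    also have "\<dots> = card ({j. Z i j \<noteq> 0} \<inter> set [0..<t])" by (rule distinct_length_filter) simp
    also have "{j. Z i j \<noteq> 0} \<inter> set [0..<t] = {j. j<t \<and> Z i j \<noteq> 0}" by auto
    finally show "length (filter (\<lambda>x. x \<noteq> 0) (map (Z i) [0..<t])) = card {j. j<t \<and> Z i j \<noteq> 0}" .
  qed
  finally show ?thesis by simp
qed

lemma len_cZ_ge: assumes "q \<in> comps n" "r \<in> comps n" "Z \<in> Smat q r"
  shows "length q \<le> length (cZ (length q) (length r) Z) \<and> length r \<le> length (cZ (length q) (length r) Z)"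
proof -
  let ?N = "SIGMA i:{..<length q}. {j. j<length r \<and> Z i j \<noteq> 0}"
  have fin: "finite ?N" by auto
  have "{..<length q} \<subseteq> fst ` ?N"
  proof
    fix i assume i: "i \<in> {..<length q}" hence i: "i < length q" by simp
    have "(\<Sum>j<length r. Z i j) = q ! i" using assms i by (auto simp: Smat_def)
    moreover have "q ! i > 0" using assms i by (auto simp: comps_def)
    ultimately obtain j where "j < length r" "Z i j \<noteq> 0"
    proof -
      assume h: "\<And>j. j < length r \<Longrightarrow> Z i j \<noteq> 0 \<Longrightarrow> thesis"
      show thesis proof (rule ccontr)
        assume "\<not> thesis" hence "\<forall>j\<in>{..<length r}. Z i j = 0" using h by auto
        hence "(\<Sum>j<length r. Z i j) = 0" by simp
        thus False using \<open>(\<Sum>j<length r. Z i j) = q ! i\<close> \<open>q ! i > 0\<close> by simp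
      qed
    qed
    thus "i \<in> fst ` ?N" using i by force
  qed
  moreover have "{..<length r} \<subseteq> snd ` ?N"
  proof
    fix j assume j: "j \<in> {..<length r}" hence j: "j < length r" by simp
    have "(\<Sum>i<length q. Z i j) = r ! j" using assms j by (auto simp: Smat_def)
    moreover have "r ! j > 0" using assms j by (auto simp: comps_def)
    ultimately obtain i where "i < length q" "Z i j \<noteq> 0"
    proof -
      assume h: "\<And>i. i < length q \<Longrightarrow> Z i j \<noteq> 0 \<Longrightarrow> thesis"
      show thesis proof (rule ccontr)
        assume "\<not> thesis" hence "\<forall>i\<in>{..<length q}. Z i j = 0" using h by auto
        hence "(\<Sum>i<length q. Z i j) = 0" by simp
        thus False using \<open>(\<Sum>i<length q. Z i j) = r ! j\<close> \<open>r ! j > 0\<close> by simp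
      qed
    qed
    thus "j \<in> snd ` ?N" using j by force
  qed
  moreover have "card (fst ` ?N) \<le> card ?N" "card (snd ` ?N) \<le> card ?N"
    by (rule card_image_le[OF fin])+
  moreover have "card {..<length q} \<le> card (fst ` ?N)" "card {..<length r} \<le> card (snd ` ?N)"
    by (rule card_mono, rule finite_imageI[OF fin], rule calculation(1),
        rule card_mono, rule finite_imageI[OF fin], rule calculation(2))
  ultimately show ?thesis unfolding len_cZ by simp
qed



definition G :: "nat \<Rightarrow> nat \<Rightarrow> nat list \<Rightarrow> int" where
  "G a b u = (if length u = 1 then 1 else if length u = 2 \<and> mset u = {#a,b#} then (if a = b then 2 else 1) else 0)"

lemma sum_Bcoeff: assumes "q \<in> comps n"
  shows "(\<Sum>u\<in>comps n. f u * int (Bcoeff q r u)) = (\<Sum>Z\<in>Smat q r. f (cZ (length q) (length r) Z))"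
proof -
  have "(\<Sum>u\<in>comps n. f u * int (Bcoeff q r u))
      = (\<Sum>u\<in>comps n. \<Sum>Z\<in>{Z. Z \<in> Smat q r \<and> cZ (length q) (length r) Z = u}. f (cZ (length q) (length r) Z))"
    unfolding Bcoeff_def by (intro sum.cong refl) auto
  also have "\<dots> = (\<Sum>Z\<in>Smat q r. f (cZ (length q) (length r) Z))"
    by (rule sum.group[OF Smat_finite[OF assms] comps_finite]) (use cZ_comps[OF assms] in auto)
  finally show ?thesis .
qed

lemma row1: assumes "q \<in> comps n" "length q = 1" "r \<in> comps n"
  defines "Zr \<equiv> (\<lambda>i j. if i = 0 \<and> j < length r then r ! j else 0)"
  shows "Smat q r = {Zr}" "cZ 1 (length r) Zr = r"
proof -
  have q: "q = [n]" using comps_len1 assms by auto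
  have rs: "sum_list r = n" and rp: "\<forall>x\<in>set r. 0 < x" using assms by (auto simp: comps_def)
  show "Smat q r = {Zr}"
  proof
    show "Smat q r \<subseteq> {Zr}"
    proof
      fix Z assume Z: "Z \<in> Smat q r"
      have "Z = Zr"
      proof (intro ext)
        fix i j show "Z i j = Zr i j"
          using Z unfolding Smat_def Zr_def q by (cases "i = 0 \<and> j < length r") auto
      qed
      thus "Z \<in> {Zr}" by simp
    qed
    show "{Zr} \<subseteq> Smat q r"
      using rs by (auto simp: Smat_def Zr_def q sum_list_sum_nth atLeast0LessThan)
  qed
  have "map (\<lambda>j. if j < length r then r ! j else 0) [0..<length r] = map ((!) r) [0..<length r]"
    by (intro map_cong) auto
  hence m: "map (\<lambda>j. if j < length r then r ! j else 0) [0..<length r] = r" by (simp add: map_nth)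
  show "cZ 1 (length r) Zr = r"
    using rp m by (auto simp: cZ_def Zr_def intro!: filter_True)
qed

lemma col1: assumes "r \<in> comps n" "length r = 1" "q \<in> comps n"
  defines "Zq \<equiv> (\<lambda>i j. if j = 0 \<and> i < length q then q ! i else 0)"
  shows "Smat q r = {Zq}" "cZ (length q) 1 Zq = q"
proof -
  have r: "r = [n]" using comps_len1 assms by auto
  have qs: "sum_list q = n" and qp: "\<forall>x\<in>set q. 0 < x" using assms by (auto simp: comps_def)
  show "Smat q r = {Zq}"
  proof
    show "Smat q r \<subseteq> {Zq}"
    proof
      fix Z assume Z: "Z \<in> Smat q r"
      have "Z = Zq"
      proof (intro ext)
        fix i j show "Z i j = Zq i j"
          using Z unfolding Smat_def Zq_def r by (cases "j = 0 \<and> i < length q") auto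
      qed
      thus "Z \<in> {Zq}" by simp
    qed
    show "{Zq} \<subseteq> Smat q r"
      using qs by (auto simp: Smat_def Zq_def r sum_list_sum_nth atLeast0LessThan)
  qed
  have "map (\<lambda>j. if j < length q then q ! j else 0) [0..<length q] = map ((!) q) [0..<length q]"
    by (intro map_cong) auto
  hence m: "map (\<lambda>j. if j < length q then q ! j else 0) [0..<length q] = q" by (simp add: map_nth)
  show "cZ (length q) 1 Zq = q"
    using qp m by (auto simp: cZ_def Zq_def intro!: filter_True)
qed



lemma mset2: "({#x,y#} = {#a,b#}) \<longleftrightarrow> (x=a\<and>y=b) \<or> (x=b \<and> y=a)"
  by (auto simp: add_eq_conv_diff)

lemma G2: "G a b [x,y] = (if (x=a\<and>y=b) \<or> (x=b \<and> y=a) then (if a = b then 2 else 1) else 0)"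
  unfolding G_def using mset2[of x y a b] by simp

lemma cZ22: "cZ 2 2 Z = filter (\<lambda>x. x \<noteq> 0) [Z 0 0, Z 0 1, Z 1 0, Z 1 1]"
  by (simp add: cZ_def numeral_2_eq_2)

lemma lt2: "{..<2::nat} = {0,1}" by auto

lemma Smat22: "Smat [q0,q1] [r0,r1] = {Z. (\<forall>i j. (2 \<le> i \<or> 2 \<le> j) \<longrightarrow> Z i j = 0) \<and>
   Z 0 0 + Z 0 1 = q0 \<and> Z 1 0 + Z 1 1 = q1 \<and> Z 0 0 + Z 1 0 = r0 \<and> Z 0 1 + Z 1 1 = r1}"
  unfolding Smat_def by (auto simp: lt2 less_2_cases_iff less_Suc_eq)


lemma four: "length (filter (\<lambda>x. x\<noteq>0) [w,x,y,z::nat]) \<le> 2 \<Longrightarrow> w+x>0 \<Longrightarrow> y+z>0 \<Longrightarrow> w+y>0 \<Longrightarrow> x+z>0 \<Longrightarrow> (x=0\<and>y=0) \<or> (w=0\<and>z=0)"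
  by (cases "w=0"; cases "x=0"; cases "y=0"; cases "z=0") auto

lemma G_nz: "G a b [x,y] \<noteq> 0 \<Longrightarrow> (x=a\<and>y=b) \<or> (x=b\<and>y=a)"
  by (simp add: G2 split: if_splits)
lemma c1: "[r0,r1] \<noteq> [q0,q1] \<Longrightarrow> [r0,r1] \<noteq> [q1,q0::nat] \<Longrightarrow> ((q0=a\<and>q1=b) \<or> (q0=b \<and> q1=a)) \<Longrightarrow> ((r0=a\<and>r1=b) \<or> (r0=b \<and> r1=a)) \<Longrightarrow> False"
  by (elim disjE conjE) simp_all
lemma t3: "[r0,r1] \<noteq> [q0,q1] \<Longrightarrow> [r0,r1] = [q1,q0] \<Longrightarrow> (if [r0,r1] = [q0,q1] then G a b [q0,q1] else 0) + (if [r0,r1] = [q1,q0] then G a b [q0,q1] else 0) = G a b [q0,q1] * G a b [r0,r1]"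
  by (simp add: G2)
lemma t4: "[r0,r1] \<noteq> [q0,q1] \<Longrightarrow> [r0,r1] \<noteq> [q1,q0] \<Longrightarrow> (if [r0,r1] = [q0,q1] then G a b [q0,q1] else 0) + (if [r0,r1] = [q1,q0] then G a b [q0,q1] else 0) = G a b [q0,q1] * G a b [r0,r1]"
proof -
  assume a: "[r0,r1] \<noteq> [q0,q1]" "[r0,r1] \<noteq> [q1,q0]"
  have "G a b [q0,q1] = 0 \<or> G a b [r0,r1] = 0"
    using c1[OF a] G_nz[of a b q0 q1] G_nz[of a b r0 r1] by blast
  then have "G a b [q0,q1] * G a b [r0,r1] = 0" by auto
  moreover have "(if [r0,r1] = [q0,q1] then G a b [q0,q1] else 0) + (if [r0,r1] = [q1,q0] then G a b [q0,q1] else 0) = 0"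
    using a by (simp only: if_False)
  ultimately show ?thesis by simp
qed
lemma t1: "[r0,r1] = [q0,q1] \<Longrightarrow> q0 = q1 \<Longrightarrow> (if [r0,r1] = [q0,q1] then G a b [q0,q1] else 0) + (if [r0,r1] = [q1,q0] then G a b [q0,q1] else 0) = G a b [q0,q1] * G a b [r0,r1]"
  by (simp add: G2)
lemma t2: "[r0,r1] = [q0,q1] \<Longrightarrow> q0 \<noteq> q1 \<Longrightarrow> (if [r0,r1] = [q0,q1] then G a b [q0,q1] else 0) + (if [r0,r1] = [q1,q0] then G a b [q0,q1] else 0) = G a b [q0,q1] * G a b [r0,r1]"
  by (simp add: G2)
lemma fin2: "(if [r0,r1] = [q0,q1] then G a b [q0,q1] else 0) + (if [r0,r1] = [q1,q0] then G a b [q0,q1] else 0) = G a b [q0,q1] * G a b [r0,r1]"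
proof (cases "[r0,r1] = [q0,q1]")
  case True thus ?thesis using t1[of r0 r1 q0 q1 a b] t2[of r0 r1 q0 q1 a b] by blast
next
  case False thus ?thesis using t3[of r0 r1 q0 q1 a b] t4[of r0 r1 q0 q1 a b] by blast
qed


lemma sq2:
  assumes pos: "0 < q0" "0 < q1" "0 < r0" "0 < r1"
  shows "(\<Sum>Z\<in>Smat [q0,q1] [r0,r1]. G a b (cZ 2 2 Z)) = G a b [q0,q1] * G a b [r0,r1]"
proof -
  define Zd where "Zd = (\<lambda>(i::nat) (j::nat). if i = 0 \<and> j = 0 then q0 else if i = 1 \<and> j = 1 then q1 else (0::nat))"
  define Za where "Za = (\<lambda>(i::nat) (j::nat). if i = 0 \<and> j = 1 then q0 else if i = 1 \<and> j = 0 then q1 else (0::nat))"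
  let ?S = "Smat [q0,q1] [r0,r1]"
  let ?f = "\<lambda>Z. G a b (cZ 2 2 Z)"
  have fin: "finite ?S" by (rule Smat_finite[of _ "q0+q1"]) (use pos in \<open>auto simp: comps_def\<close>)
  have sub: "\<forall>Z\<in>?S. ?f Z \<noteq> 0 \<longrightarrow> Z = Zd \<or> Z = Za"
  proof (intro ballI impI)
    fix Z assume Z: "Z \<in> ?S" and f: "?f Z \<noteq> 0"
    have l: "length (cZ 2 2 Z) \<le> 2" using f by (auto simp: G_def split: if_splits)
    have e: "\<forall>i j. (2 \<le> i \<or> 2 \<le> j) \<longrightarrow> Z i j = 0"
      "Z 0 0 + Z 0 1 = q0" "Z 1 0 + Z 1 1 = q1" "Z 0 0 + Z 1 0 = r0" "Z 0 1 + Z 1 1 = r1"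
      using Z by (auto simp: Smat22)
    have "(Z 0 1 = 0 \<and> Z 1 0 = 0) \<or> (Z 0 0 = 0 \<and> Z 1 1 = 0)"
      by (rule four[OF l[unfolded cZ22]]) (use e(2-5) pos in simp_all)
    moreover have "Z 0 1 = 0 \<and> Z 1 0 = 0 \<Longrightarrow> Z = Zd"
    proof (intro ext)
      fix i j assume "Z 0 1 = 0 \<and> Z 1 0 = 0"
      thus "Z i j = Zd i j" using e unfolding Zd_def
        by (cases "i < 2"; cases "j < 2") (auto simp: less_2_cases_iff)
    qed
    moreover have "Z 0 0 = 0 \<and> Z 1 1 = 0 \<Longrightarrow> Z = Za"
    proof (intro ext)
      fix i j assume "Z 0 0 = 0 \<and> Z 1 1 = 0"
      thus "Z i j = Za i j" using e unfolding Za_def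
        by (cases "i < 2"; cases "j < 2") (auto simp: less_2_cases_iff)
    qed
    ultimately show "Z = Zd \<or> Z = Za" by blast
  qed
  have dne: "Zd \<noteq> Za" using pos unfolding Zd_def Za_def by (metis zero_neq_one less_irrefl)
  have md: "Zd \<in> ?S \<longleftrightarrow> [r0,r1] = [q0,q1]" by (auto simp: Smat22 Zd_def)
  have ma: "Za \<in> ?S \<longleftrightarrow> [r0,r1] = [q1,q0]" by (auto simp: Smat22 Za_def)
  have cd: "cZ 2 2 Zd = [q0,q1]" using pos by (simp add: cZ22 Zd_def)
  have ca: "cZ 2 2 Za = [q0,q1]" using pos by (simp add: cZ22 Za_def)
  have "(\<Sum>Z\<in>?S. ?f Z) = (\<Sum>Z\<in>{Zd,Za} \<inter> ?S. ?f Z)"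
    by (rule sum.mono_neutral_right[OF fin]) (use sub in auto)
  also have "\<dots> = (\<Sum>Z\<in>{Zd,Za}. if Z \<in> ?S then ?f Z else 0)"
    by (rule sum.inter_restrict) simp
  also have "\<dots> = (if [r0,r1] = [q0,q1] then G a b [q0,q1] else 0) + (if [r0,r1] = [q1,q0] then G a b [q0,q1] else 0)"
  proof -
    have "(\<Sum>Z\<in>{Zd,Za}. if Z \<in> ?S then ?f Z else 0) = (if Zd \<in> ?S then ?f Zd else 0) + (if Za \<in> ?S then ?f Za else 0)"
      by (subst sum.insert) (use dne in auto)
    also have "\<dots> = (if [r0,r1] = [q0,q1] then G a b [q0,q1] else 0) + (if [r0,r1] = [q1,q0] then G a b [q0,q1] else 0)"
      by (simp only: md ma cd ca)
    finally show ?thesis .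
  qed
  also have "\<dots> = G a b [q0,q1] * G a b [r0,r1]"
    by (rule fin2)
  finally show ?thesis .
qed



lemma G_len3: "3 \<le> length u \<Longrightarrow> G a b u = 0" by (simp add: G_def)

lemma key: assumes "1 \<le> n" "q \<in> comps n" "r \<in> comps n"
  shows "(\<Sum>u\<in>comps n. G a b u * int (Bcoeff q r u)) = G a b q * G a b r"
proof -
  have lq: "1 \<le> length q" and lr: "1 \<le> length r" using comps_ne assms by auto
  have s: "(\<Sum>u\<in>comps n. G a b u * int (Bcoeff q r u)) = (\<Sum>Z\<in>Smat q r. G a b (cZ (length q) (length r) Z))"
    by (rule sum_Bcoeff[OF assms(2)])
  show ?thesis
  proof (cases "length q = 1")
    case True
    note R = row1[OF assms(2) True assms(3)]
    have "G a b q = 1" using True by (simp add: G_def)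
    thus ?thesis unfolding s R(1) using True R(2) by simp
  next
    case F1: False
    show ?thesis
    proof (cases "length r = 1")
      case True
      note R = col1[OF assms(3) True assms(2)]
      have "G a b r = 1" using True by (simp add: G_def)
      thus ?thesis unfolding s R(1) using True R(2) by simp
    next
      case F2: False
      show ?thesis
      proof (cases "length q = 2 \<and> length r = 2")
        case True
        obtain q0 q1 where q: "q = [q0,q1]" using len2 True by blast
        obtain r0 r1 where r: "r = [r0,r1]" using len2 True by blast
        have pos: "0 < q0" "0 < q1" "0 < r0" "0 < r1" using assms(2,3) q r by (auto simp: comps_def)
        have "length q = 2" "length r = 2" using True by auto
        thus ?thesis unfolding s using sq2[OF pos, of a b] q r by (simp only:)
      next
        case False
        hence l3: "3 \<le> length q \<or> 3 \<le> length r" using F1 F2 lq lr by linarith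
        have "\<forall>Z\<in>Smat q r. G a b (cZ (length q) (length r) Z) = 0"
        proof
          fix Z assume "Z \<in> Smat q r"
          hence "3 \<le> length (cZ (length q) (length r) Z)" using len_cZ_ge[OF assms(2,3)] l3 by fastforce
          thus "G a b (cZ (length q) (length r) Z) = 0" by (rule G_len3)
        qed
        moreover have "G a b q * G a b r = 0" using l3 G_len3 by auto
        ultimately show ?thesis unfolding s by simp
      qed
    qed
  qed
qed



definition phi :: "nat \<Rightarrow> nat \<Rightarrow> nat \<Rightarrow> nat \<Rightarrow> (nat list \<Rightarrow> int) \<Rightarrow> int" where
  "phi n p a b x = (\<Sum>q\<in>comps n. G a b q * x q) mod int p"

lemma phi_mul: assumes "1 \<le> n"
  shows "phi n p a b (smul n p f g) = (phi n p a b f * phi n p a b g) mod int p"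
proof -
  let ?C = "comps n"
  let ?S = "\<lambda>u. (\<Sum>q\<in>?C. \<Sum>r\<in>?C. f q * g r * int (Bcoeff q r u))"
  have "phi n p a b (smul n p f g) = (\<Sum>u\<in>?C. G a b u * (?S u mod int p)) mod int p"
    by (simp add: phi_def smul_def)
  also have "\<dots> = (\<Sum>u\<in>?C. (G a b u * (?S u mod int p)) mod int p) mod int p"
    by (simp add: mod_sum_eq)
  also have "\<dots> = (\<Sum>u\<in>?C. (G a b u * ?S u) mod int p) mod int p"
    by (simp add: mod_mult_right_eq)
  also have "\<dots> = (\<Sum>u\<in>?C. G a b u * ?S u) mod int p"
    by (simp add: mod_sum_eq)
  also have "(\<Sum>u\<in>?C. G a b u * ?S u) = (\<Sum>u\<in>?C. \<Sum>q\<in>?C. \<Sum>r\<in>?C. f q * g r * (G a b u * int (Bcoeff q r u)))"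
    by (simp add: sum_distrib_left mult_ac)
  also have "\<dots> = (\<Sum>q\<in>?C. \<Sum>u\<in>?C. \<Sum>r\<in>?C. f q * g r * (G a b u * int (Bcoeff q r u)))"
    by (rule sum.swap)
  also have "\<dots> = (\<Sum>q\<in>?C. \<Sum>r\<in>?C. \<Sum>u\<in>?C. f q * g r * (G a b u * int (Bcoeff q r u)))"
    by (intro sum.cong refl sum.swap)
  also have "\<dots> = (\<Sum>q\<in>?C. \<Sum>r\<in>?C. f q * g r * (G a b q * G a b r))"
    by (intro sum.cong refl) (simp add: sum_distrib_left[symmetric] key[OF assms])
  also have "\<dots> = (\<Sum>q\<in>?C. G a b q * f q) * (\<Sum>r\<in>?C. G a b r * g r)"
    by (simp add: sum_product mult_ac)
  finally show ?thesis by (simp add: phi_def mod_mult_eq)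
qed

lemma p_pos: "prime p \<Longrightarrow> (0::int) < int p" using prime_gt_0_nat by simp

lemma sadd_Sig: "prime p \<Longrightarrow> f \<in> Sig n p \<Longrightarrow> g \<in> Sig n p \<Longrightarrow> sadd p f g \<in> Sig n p"
  using p_pos by (auto simp: Sig_def sadd_def)

lemma sneg_Sig: "prime p \<Longrightarrow> f \<in> Sig n p \<Longrightarrow> sneg p f \<in> Sig n p"
  using p_pos by (auto simp: Sig_def sneg_def)

lemma Bcoeff_out: assumes "q \<in> comps n" "u \<notin> comps n" shows "Bcoeff q r u = 0"
proof -
  have "{Z \<in> Smat q r. cZ (length q) (length r) Z = u} = {}" using cZ_comps[OF assms(1)] assms(2) by blast
  thus ?thesis unfolding Bcoeff_def by (simp only: card.empty)
qed

lemma smul_Sig: "prime p \<Longrightarrow> smul n p f g \<in> Sig n p"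
  using p_pos by (auto simp: Sig_def smul_def Bcoeff_out)

lemma phi_add: "phi n p a b (sadd p f g) = (phi n p a b f + phi n p a b g) mod int p"
proof -
  have "phi n p a b (sadd p f g) = (\<Sum>q\<in>comps n. (G a b q * ((f q + g q) mod int p)) mod int p) mod int p"
    by (simp add: phi_def sadd_def mod_sum_eq)
  also have "\<dots> = (\<Sum>q\<in>comps n. G a b q * f q + G a b q * g q) mod int p"
    by (simp add: mod_mult_right_eq mod_sum_eq algebra_simps)
  finally show ?thesis by (simp add: phi_def sum.distrib mod_add_eq)
qed

lemma phi_neg: "phi n p a b (sneg p f) = (- phi n p a b f) mod int p"
proof -
  have "phi n p a b (sneg p f) = (\<Sum>q\<in>comps n. (G a b q * ((- f q) mod int p)) mod int p) mod int p"
    by (simp add: phi_def sneg_def mod_sum_eq)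
  also have "\<dots> = (\<Sum>q\<in>comps n. - (G a b q * f q)) mod int p"
    by (simp add: mod_mult_right_eq mod_sum_eq algebra_simps)
  finally show ?thesis by (simp add: phi_def sum_negf mod_minus_eq)
qed



lemma phi_Sig_range: "prime p \<Longrightarrow> 0 \<le> phi n p a b x \<and> phi n p a b x < int p"
  using p_pos by (simp add: phi_def)

lemma G_one: "G a b [n] = 1" by (simp add: G_def)

lemma phi_scal: assumes "1 \<le> n"
  shows "phi n p a b (\<lambda>s. if s = [n] then c else 0) = c mod int p"
proof -
  have "[n] \<in> comps n" using assms by (auto simp: comps_def)
  have "(\<Sum>q\<in>comps n. G a b q * (if q = [n] then c else 0)) = (\<Sum>q\<in>comps n. if q = [n] then c else 0)"
    by (intro sum.cong refl) (simp add: G_one)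
  also have "\<dots> = c" using \<open>[n] \<in> comps n\<close> sum.delta[OF comps_finite[of n], of "[n]" "\<lambda>_. c"] by simp
  finally show ?thesis by (simp add: phi_def)
qed

lemma inverse_mod: assumes "prime p" "0 < k" "k < int p"
  shows "\<exists>t. (t * k) mod int p = 1"
proof -
  have pi: "prime (int p)" using assms(1) by simp
  have "\<not> int p dvd k" using assms(2,3) zdvd_imp_le by fastforce
  hence "coprime (int p) k" using prime_imp_coprime[OF pi] by blast
  hence g: "gcd k (int p) = 1" by (simp add: coprime_iff_gcd_eq_1 gcd.commute)
  obtain u v where "u * k + v * int p = gcd k (int p)" using bezout_int by blast
  hence "u * k + v * int p = 1" using g by simp
  hence "(u * k) mod int p = 1 mod int p" by (metis mod_mult_self3 add.commute mult.commute)
  moreover have "1 mod int p = 1" using prime_gt_1_nat[OF assms(1)] by simp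
  ultimately have "(u * k) mod int p = 1" by simp
  thus ?thesis by blast
qed

definition Iker :: "nat \<Rightarrow> nat \<Rightarrow> nat \<Rightarrow> nat \<Rightarrow> (nat list \<Rightarrow> int) set" where
  "Iker n p a b = {x \<in> Sig n p. phi n p a b x = 0}"

lemma Iker_max: assumes n: "1 \<le> n" and p: "prime p"
  shows "max_lideal n p (Iker n p a b)"
proof -
  have pp: "(0::int) < int p" using p_pos[OF p] .
  have p1: "(1::int) < int p" using prime_gt_1_nat[OF p] by simp
  have L: "lideal n p (Iker n p a b)"
    unfolding lideal_def
  proof (intro conjI ballI)
    show "Iker n p a b \<subseteq> Sig n p" by (auto simp: Iker_def)
    show "(\<lambda>_. 0) \<in> Iker n p a b" using pp by (auto simp: Iker_def Sig_def phi_def)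
    fix x y assume "x \<in> Iker n p a b" "y \<in> Iker n p a b"
    thus "sadd p x y \<in> Iker n p a b" using sadd_Sig[OF p] by (auto simp: Iker_def phi_add)
  next
    fix x assume "x \<in> Iker n p a b"
    thus "sneg p x \<in> Iker n p a b" using sneg_Sig[OF p] by (auto simp: Iker_def phi_neg)
  next
    fix c x assume "c \<in> Sig n p" "x \<in> Iker n p a b"
    thus "smul n p c x \<in> Iker n p a b" using smul_Sig[OF p] by (auto simp: Iker_def phi_mul[OF n])
  qed
  have e1: "(\<lambda>s. if s = [n] then 1 else 0) \<in> Sig n p" using n p1 by (auto simp: Sig_def comps_def)
  have "phi n p a b (\<lambda>s. if s = [n] then 1 else 0) = 1" using phi_scal[OF n] p1 by simp
  hence "(\<lambda>s. if s = [n] then 1 else 0) \<notin> Iker n p a b" by (simp add: Iker_def)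
  hence ne: "Iker n p a b \<noteq> Sig n p" using e1 by blast
  have M: "J = Iker n p a b \<or> J = Sig n p" if J: "lideal n p J" "Iker n p a b \<subseteq> J" for J
  proof (cases "J = Iker n p a b")
    case False
    then obtain y where y: "y \<in> J" "y \<notin> Iker n p a b" using J(2) by blast
    have yS: "y \<in> Sig n p" using y J(1) by (auto simp: lideal_def)
    let ?k = "phi n p a b y"
    have k: "0 < ?k" "?k < int p" using y yS phi_Sig_range[OF p] by (auto simp: Iker_def order_le_less)
    obtain t where t: "(t * ?k) mod int p = 1" using inverse_mod[OF p k] by blast
    have "Sig n p \<subseteq> J"
    proof
      fix z assume zS: "z \<in> Sig n p"
      define c where "c = phi n p a b z * t"
      define e where "e = (\<lambda>s. if s = [n] then c mod int p else 0)"
      have eS: "e \<in> Sig n p" using pp n by (auto simp: Sig_def e_def comps_def)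
      define ey where "ey = smul n p e y"
      have eyJ: "ey \<in> J" using J(1) eS y(1) by (auto simp: lideal_def ey_def)
      have eyS: "ey \<in> Sig n p" using smul_Sig[OF p] by (simp add: ey_def)
      have "phi n p a b ey = ((c mod int p) mod int p * ?k) mod int p"
        by (simp add: ey_def phi_mul[OF n] e_def phi_scal[OF n])
      also have "\<dots> = (phi n p a b z * ((t * ?k) mod int p)) mod int p"
        by (simp add: c_def mod_mult_eq mult_ac mod_mult_right_eq)
      also have "\<dots> = phi n p a b z" using t by (simp add: phi_def)
      finally have phey: "phi n p a b ey = phi n p a b z" .
      define w where "w = sadd p z (sneg p ey)"
      have wS: "w \<in> Sig n p" using sadd_Sig[OF p] sneg_Sig[OF p] zS eyS by (simp add: w_def)
      have "phi n p a b w = 0" unfolding w_def phi_add phi_neg phey by (simp add: mod_add_right_eq)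
      hence "w \<in> J" using wS J(2) by (auto simp: Iker_def)
      hence "sadd p w ey \<in> J" using eyJ J(1) by (auto simp: lideal_def)
      moreover have "sadd p w ey = z"
      proof
        fix s
        have "0 \<le> z s" "z s < int p" using zS by (auto simp: Sig_def)
        thus "sadd p w ey s = z s" by (simp add: w_def sadd_def sneg_def mod_simps)
      qed
      ultimately show "z \<in> J" by simp
    qed
    thus ?thesis using J(1) by (auto simp: lideal_def)
  qed simp
  show ?thesis unfolding max_lideal_def using L ne M by blast
qed

lemma rad_phi: "1 \<le> n \<Longrightarrow> prime p \<Longrightarrow> x \<in> rad n p \<Longrightarrow> (\<Sum>q\<in>comps n. G a b q * x q) mod int p = 0"
  using Iker_max[of n p a b] unfolding rad_def Iker_def phi_def by blast



lemma Bbar_eval: "prime p \<Longrightarrow> Bbar p q s = (if s = q then 1 else 0)"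
  using prime_gt_1_nat[of p] by (simp add: Bbar_def)

lemma Bbar_inj: "prime p \<Longrightarrow> inj (Bbar p)"
proof (rule injI)
  fix q q' assume p: "prime p" and e: "Bbar p q = Bbar p q'"
  have "Bbar p q q = Bbar p q' q" using e by simp
  thus "q = q'" using Bbar_eval[OF p] by (simp split: if_splits)
qed

lemma lincomb_reindex:
  assumes "inj_on d P" "finite P"
  shows "lincomb p (\<lambda>w. h (inv_into P d w)) (d ` P) = (\<lambda>s. (\<Sum>a\<in>P. h a * d a s) mod int p)"
proof
  fix s
  have "(\<Sum>w\<in>d ` P. h (inv_into P d w) * w s) = (\<Sum>a\<in>P. h (inv_into P d (d a)) * d a s)"
    by (rule sum.reindex[OF assms(1), unfolded comp_def])
  also have "\<dots> = (\<Sum>a\<in>P. h a * d a s)" using assms(1) by (intro sum.cong refl) simp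
  finally show "lincomb p (\<lambda>w. h (inv_into P d w)) (d ` P) s = (\<Sum>a\<in>P. h a * d a s) mod int p"
    by (simp add: lincomb_def)
qed

lemma in_Ysp: assumes p: "prime p" and f: "f \<in> Sig n p" and sup: "\<And>s. f s \<noteq> 0 \<Longrightarrow> m \<le> length s"
  shows "f \<in> Ysp n p m"
proof -
  let ?Q = "{q \<in> comps n. m \<le> length q}"
  have fin: "finite ?Q" using comps_finite by simp
  have inj: "inj_on (Bbar p) ?Q" using Bbar_inj[OF p] by (simp add: inj_on_def inj_def)
  have "lincomb p (\<lambda>w. f (inv_into ?Q (Bbar p) w)) (Bbar p ` ?Q) = f"
  proof
    fix s
    have "(\<Sum>q\<in>?Q. f q * Bbar p q s) = (\<Sum>q\<in>?Q. if q = s then f s else 0)"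
      by (intro sum.cong refl) (auto simp: Bbar_eval[OF p])
    also have "\<dots> = (if s \<in> ?Q then f s else 0)" using fin by (simp add: sum.delta)
    also have "\<dots> = f s" using f sup by (auto simp: Sig_def)
    finally show "lincomb p (\<lambda>w. f (inv_into ?Q (Bbar p) w)) (Bbar p ` ?Q) s = f s"
      using lincomb_reindex[OF inj fin, of p f] f by (simp add: Sig_def)
  qed
  moreover have "Bbar p ` ?Q = {Bbar p q | q. q \<in> comps n \<and> m \<le> length q}" by auto
  ultimately show ?thesis unfolding Ysp_def span_p_def
    by (intro CollectI exI[of _ "\<lambda>w. f (inv_into ?Q (Bbar p) w)"] exI[of _ "Bbar p ` ?Q"]) (use fin in auto)
qed



lemma G0_eq: assumes "q \<in> comps n" shows "G 0 n q * x q = (if q = [n] then x q else 0)"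
proof (cases "length q = 1")
  case True thus ?thesis using comps_len1[OF assms] G_one by auto
next
  case False
  have "G 0 n q = 0"
  proof (cases "length q = 2")
    case True
    then obtain y z where q: "q = [y,z]" using len2 by blast
    have "0 < y" "0 < z" using assms q by (auto simp: comps_def)
    thus ?thesis using G_nz[of 0 n y z] q by auto
  next
    case False thus ?thesis using \<open>length q \<noteq> 1\<close> by (simp add: G_def)
  qed
  thus ?thesis using False by auto
qed

lemma Gab_eq: assumes "q \<in> comps n" "1 \<le> a" "a < n"
  shows "G a (n-a) q * x q = (if q=[n] then x q else 0) + (if q=[a,n-a] then (if a = n-a then 2 else 1) * x q else 0)
     + (if q=[n-a,a] then (if a = n-a then 0 else 1) * x q else 0)"
proof (cases "length q = 1")
  case True thus ?thesis using comps_len1[OF assms(1)] G_one by auto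
next
  case F: False
  show ?thesis
  proof (cases "length q = 2")
    case True
    then obtain y z where q: "q = [y,z]" using len2 by blast
    show ?thesis
    proof (cases "q = [a,n-a] \<or> q = [n-a,a]")
      case True thus ?thesis unfolding q G2 by auto
    next
      case False
      hence "G a (n-a) q = 0" using G_nz[of a "n-a" y z] q by auto
      thus ?thesis using False q by auto
    qed
  next
    case False thus ?thesis using F by (auto simp: G_def)
  qed
qed

lemma rad_Sig: "x \<in> rad n p \<Longrightarrow> x \<in> Sig n p" by (simp add: rad_def)

lemma rad_top: assumes "1 \<le> n" "prime p" "x \<in> rad n p" shows "x [n] = 0"
proof -
  have "(\<Sum>q\<in>comps n. G 0 n q * x q) mod int p = 0" by (rule rad_phi[OF assms])
  moreover have "(\<Sum>q\<in>comps n. G 0 n q * x q) = (\<Sum>q\<in>comps n. if q = [n] then x q else 0)"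
    by (intro sum.cong refl) (rule G0_eq)
  moreover have "[n] \<in> comps n" using assms by (auto simp: comps_def)
  ultimately have "x [n] mod int p = 0" using comps_finite[of n] by (simp add: sum.delta)
  moreover have "0 \<le> x [n]" "x [n] < int p" using rad_Sig[OF assms(3)] by (auto simp: Sig_def)
  ultimately show ?thesis by simp
qed

lemma rad_pair: assumes "1 \<le> n" "prime p" "x \<in> rad n p" "1 \<le> a" "a < n"
  shows "((if a = n-a then 2 else 1) * x [a,n-a] + (if a = n-a then 0 else 1) * x [n-a,a]) mod int p = 0"
proof -
  have "(\<Sum>q\<in>comps n. G a (n-a) q * x q) mod int p = 0" by (rule rad_phi[OF assms(1-3)])
  moreover have "(\<Sum>q\<in>comps n. G a (n-a) q * x q) = (\<Sum>q\<in>comps n. if q = [n] then x q else 0)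
     + (\<Sum>q\<in>comps n. if q=[a,n-a] then (if a = n-a then 2 else 1) * x q else 0)
     + (\<Sum>q\<in>comps n. if q=[n-a,a] then (if a = n-a then 0 else 1) * x q else 0)"
    unfolding sum.distrib[symmetric] by (intro sum.cong refl) (rule Gab_eq[OF _ assms(4,5)])
  moreover have "[n] \<in> comps n" "[a,n-a] \<in> comps n" "[n-a,a] \<in> comps n" using assms by (auto simp: comps_def)
  ultimately show ?thesis using comps_finite[of n] rad_top[OF assms(1-3)] by (simp add: sum.delta)
qed



lemma in_Tsp:
  assumes n: "1 \<le> n" and p: "prime p" and x: "x \<in> Sig n p"
    and rel: "\<And>a. 1 \<le> a \<Longrightarrow> a < n - a \<Longrightarrow> (x [a,n-a] + x [n-a,a]) mod int p = 0"
  shows "(\<lambda>s. if length s = 2 \<and> s!0 \<noteq> s!1 then x s else 0) \<in> Tsp n p"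
proof -
  define u where "u = (\<lambda>s. if length s = 2 \<and> s!0 \<noteq> s!1 then x s else 0)"
  define P where "P = {a. 1 \<le> a \<and> a < n - a}"
  define d where "d = (\<lambda>a. sadd p (Bbar p [a,n-a]) (sneg p (Bbar p [n-a,a])))"
  have p1: "(1::int) < int p" using prime_gt_1_nat[OF p] by simp
  have finP: "finite P" unfolding P_def by (rule finite_subset[of _ "{..<n}"]) auto
  have deval: "d a s = (if s = [a,n-a] then 1 else if s = [n-a,a] then (-1) mod int p else 0)"
    if "a \<in> P" for a s
  proof -
    have "[a,n-a] \<noteq> [n-a,a]" using that by (auto simp: P_def)
    thus ?thesis using p1 by (auto simp: d_def sadd_def sneg_def Bbar_eval[OF p])
  qed
  have dnz: "d a s \<noteq> 0 \<Longrightarrow> s = [a,n-a] \<or> s = [n-a,a]" if "a \<in> P" for a s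
    using deval[OF that] by (auto split: if_splits)
  have inj: "inj_on d P"
  proof (rule inj_onI)
    fix a a' assume a: "a \<in> P" and a': "a' \<in> P" and e: "d a = d a'"
    have "d a' [a,n-a] = 1" using e deval[OF a] by simp
    hence "[a,n-a] = [a',n-a'] \<or> [a,n-a] = [n-a',a']" using dnz[OF a', of "[a,n-a]"] by simp
    thus "a = a'" using a a' by (auto simp: P_def)
  qed
  have gens: "d ` P \<subseteq> {sadd p (Bbar p q) (sneg p (Bbar p r)) | q r.
      q \<in> comps n \<and> r \<in> comps n \<and> mset q = mset r}"
  proof
    fix w assume "w \<in> d ` P"
    then obtain a where a: "a \<in> P" "w = d a" by blast
    have "[a,n-a] \<in> comps n" "[n-a,a] \<in> comps n" "mset [a,n-a] = mset [n-a,a]"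
      using a by (auto simp: P_def comps_def)
    thus "w \<in> {sadd p (Bbar p q) (sneg p (Bbar p r)) | q r.
      q \<in> comps n \<and> r \<in> comps n \<and> mset q = mset r}" using a unfolding d_def by blast
  qed
  have xr: "0 \<le> x s" "x s < int p" for s using x by (auto simp: Sig_def)
  have val: "(\<Sum>a\<in>P. x [a,n-a] * d a s) mod int p = u s" for s
  proof -
    have "(\<Sum>a\<in>P. x [a,n-a] * d a s) = (\<Sum>a\<in>P. (if a = s!0 then (if s = [s!0, n - s!0] then x s else 0) else 0)
        + (if a = s!1 then (if s = [n - s!1, s!1] then x [a,n-a] * ((-1) mod int p) else 0) else 0))"
    proof (intro sum.cong refl)
      fix a assume a: "a \<in> P"
      have ne: "a \<noteq> n - a" using a by (auto simp: P_def)
      show "x [a,n-a] * d a s = (if a = s!0 then (if s = [s!0, n - s!0] then x s else 0) else 0)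
        + (if a = s!1 then (if s = [n - s!1, s!1] then x [a,n-a] * ((-1) mod int p) else 0) else 0)"
        unfolding deval[OF a] using ne by auto
    qed
    also have "\<dots> = (if s!0 \<in> P \<and> s = [s!0, n - s!0] then x s else 0)
        + (if s!1 \<in> P \<and> s = [n - s!1, s!1] then x [s!1,n-s!1] * ((-1) mod int p) else 0)"
      unfolding sum.distrib using finP by (simp add: sum.delta)
    finally have S: "(\<Sum>a\<in>P. x [a,n-a] * d a s) = \<dots>" .
    show ?thesis
    proof (cases "s!0 \<in> P \<and> s = [s!0, n - s!0]")
      case True
      define y where "y = s!0"
      have y: "s = [y, n-y]" "1 \<le> y" "y < n - y" using True by (auto simp: y_def P_def)
      hence "s!1 = n - y" by simp
      hence "\<not> (s!1 \<in> P)" using y(3) by (auto simp: P_def)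
      hence "\<not> (s!1 \<in> P \<and> s = [n - s!1, s!1])" by blast
      moreover have "length s = 2 \<and> s!0 \<noteq> s!1" using y by simp
      hence "u s = x s" unfolding u_def by simp
      ultimately show ?thesis using S xr[of s] by (simp only: if_P[OF True] if_not_P[OF \<open>\<not> (s!1 \<in> P \<and> s = [n - s!1, s!1])\<close>]) simp
    next
      case F1: False
      show ?thesis
      proof (cases "s!1 \<in> P \<and> s = [n - s!1, s!1]")
        case True
        define a where "a = s!1"
        have a: "1 \<le> a" "a < n - a" "s = [n-a,a]" using True by (auto simp: a_def P_def)
        have us: "u s = x s" using a by (auto simp: u_def)
        have "(x [a,n-a] + x s) mod int p = 0" using rel[OF a(1,2)] a(3) by simp
        hence "x s mod int p = (- x [a,n-a]) mod int p" by (metis add.commute add.right_neutral mod_add_left_eq diff_add_cancel minus_mod_eq_mult_div[symmetric] mod_0 diff_minus_eq_add mod_diff_left_eq)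
        hence "x s = (- x [a,n-a]) mod int p" using xr[of s] by simp
        moreover have "(x [a,n-a] * ((-1) mod int p)) mod int p = (- x [a,n-a]) mod int p"
          using mod_mult_right_eq[of "x [a,n-a]" "-1" "int p"] by simp
        moreover have "(\<Sum>a\<in>P. x [a,n-a] * d a s) = x [a,n-a] * ((-1) mod int p)"
          using S unfolding a_def by (simp only: if_not_P[OF F1] if_P[OF True])
        ultimately show ?thesis using us by simp
      next
        case F2: False
        have "u s = 0"
        proof (rule ccontr)
          assume "u s \<noteq> 0"
          hence l: "length s = 2" "s!0 \<noteq> s!1" "x s \<noteq> 0" by (auto simp: u_def split: if_splits)
          hence sc: "s \<in> comps n" using x by (auto simp: Sig_def)
          obtain y z where s: "s = [y,z]" using len2 l(1) by blast
          have "0 < y" "0 < z" "y + z = n" using sc s by (auto simp: comps_def)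
          thus False using F1 F2 s l(2) by (auto simp: P_def)
        qed
        moreover have "(\<Sum>a\<in>P. x [a,n-a] * d a s) = 0"
          using S by (simp only: if_not_P[OF F1] if_not_P[OF F2] add_0)
        ultimately show ?thesis by simp
      qed
    qed
  qed
  have "lincomb p (\<lambda>w. x [inv_into P d w, n - inv_into P d w]) (d ` P) = u"
    using lincomb_reindex[OF inj finP, of p "\<lambda>a. x [a, n-a]"] val by auto
  hence "u \<in> Tsp n p" unfolding Tsp_def span_p_def using finP gens by blast
  thus ?thesis by (simp add: u_def)
qed



theorem lemma3p2:
  fixes n p :: nat
  assumes "1 \<le> n" and "prime p"
  shows "((odd n \<or> p \<noteq> 2) \<longrightarrow>
           rad n p \<subseteq> ssum p (Ysp n p 2 \<inter> Tsp n p) (Ysp n p 3)) \<and>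
         ((even n \<and> p = 2) \<longrightarrow>
           rad n p \<subseteq> ssum p (span_p p {Bbar p [n div 2, n div 2]})
                              (ssum p (Ysp n p 2 \<inter> Tsp n p) (Ysp n p 3)))"
proof -
  note n = assms(1) and p = assms(2)
  have pp: "(0::int) < int p" using p_pos[OF p] .
  have main: "\<exists>u v. u \<in> Ysp n p 2 \<inter> Tsp n p \<and> v \<in> Ysp n p 3 \<and>
       u = (\<lambda>s. if length s = 2 \<and> s!0 \<noteq> s!1 then x s else 0) \<and>
       v = (\<lambda>s. if 3 \<le> length s then x s else 0)"
    if xr: "x \<in> rad n p" for x
  proof -
    have x: "x \<in> Sig n p" using rad_Sig[OF xr] .
    define u where "u = (\<lambda>s. if length s = 2 \<and> s!0 \<noteq> s!1 then x s else 0)"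
    define v where "v = (\<lambda>s. if 3 \<le> length s then x s else (0::int))"
    have uS: "u \<in> Sig n p" using x by (auto simp: Sig_def u_def)
    have vS: "v \<in> Sig n p" using x by (auto simp: Sig_def v_def)
    have uY: "u \<in> Ysp n p 2" by (rule in_Ysp[OF p uS]) (auto simp: u_def split: if_splits)
    have vY: "v \<in> Ysp n p 3" by (rule in_Ysp[OF p vS]) (auto simp: v_def split: if_splits)
    have rel: "(x [a,n-a] + x [n-a,a]) mod int p = 0" if "1 \<le> a" "a < n - a" for a
      using rad_pair[OF n p xr that(1)] that by auto
    have uT: "u \<in> Tsp n p" unfolding u_def by (rule in_Tsp[OF n p x rel])
    show ?thesis using uY uT vY u_def v_def by blast
  qed
  have low: "x s = 0" if xr: "x \<in> rad n p" and l: "length s < 2" for x s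
  proof (rule ccontr)
    assume ne: "x s \<noteq> 0"
    hence sc: "s \<in> comps n" using rad_Sig[OF xr] by (auto simp: Sig_def)
    hence "length s = 1" using l comps_ne[OF sc n] by simp
    hence "s = [n]" using comps_len1[OF sc] by simp
    thus False using ne rad_top[OF n p xr] by simp
  qed
  have eq2: "x s = 0 \<or> (n = 2 * c \<and> (2 * x s) mod int p = 0)" if xr: "x \<in> rad n p" and s: "s = [c,c]" for x s c
  proof (cases "x s = 0")
    case False
    hence sc: "s \<in> comps n" using rad_Sig[OF xr] by (auto simp: Sig_def)
    hence nc: "n = 2 * c" "1 \<le> c" using s by (auto simp: comps_def)
    have "((if c = n-c then 2 else 1) * x [c,n-c] + (if c = n-c then 0 else 1) * x [n-c,c]) mod int p = 0"
      by (rule rad_pair[OF n p xr]) (use nc in auto)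
    hence "(2 * x s) mod int p = 0" using nc s by simp
    thus ?thesis using nc by simp
  qed simp
  have xrange: "0 \<le> x s \<and> x s < int p" if "x \<in> rad n p" for x s
    using rad_Sig[OF that] by (auto simp: Sig_def)
  show ?thesis
  proof (intro conjI impI)
    assume h: "odd n \<or> p \<noteq> 2"
    show "rad n p \<subseteq> ssum p (Ysp n p 2 \<inter> Tsp n p) (Ysp n p 3)"
    proof
      fix x assume xr: "x \<in> rad n p"
      obtain u v where uv: "u \<in> Ysp n p 2 \<inter> Tsp n p" "v \<in> Ysp n p 3"
        "u = (\<lambda>s. if length s = 2 \<and> s!0 \<noteq> s!1 then x s else 0)"
        "v = (\<lambda>s. if 3 \<le> length s then x s else 0)" using main[OF xr] by blast
      have "sadd p u v = x"
      proof
        fix s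
        have "x s = 0" if l2: "length s = 2" and e01: "s!0 = s!1"
        proof -
          obtain c d where s: "s = [c,d]" using len2 l2 by blast
          hence s: "s = [c,c]" using e01 by simp
          show "x s = 0"
          proof (cases "p = 2")
            case True
            hence "odd n" using h by simp
            thus ?thesis using eq2[OF xr s] by auto
          next
            case False
            have "x s = 0 \<or> int p dvd 2 * x s" using eq2[OF xr s] by (auto simp: dvd_eq_mod_eq_0)
            moreover have "\<not> int p dvd 2"
            proof
              assume "int p dvd 2"
              hence "p dvd 2" by presburger
              hence "p \<le> 2" by (simp add: dvd_imp_le)
              thus False using False prime_gt_1_nat[OF p] by simp
            qed
            moreover have "prime (int p)" using p by simp
            ultimately have "x s = 0 \<or> int p dvd x s" using prime_dvd_mult_iff by blast
            thus ?thesis using xrange[OF xr, of s] zdvd_imp_le by fastforce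
          qed
        qed
        moreover have "\<not> 3 \<le> length s \<Longrightarrow> length s = 2 \<or> length s < 2" by arith
        ultimately show "sadd p u v s = x s" using xrange[OF xr, of s] low[OF xr, of s]
          by (cases "length s = 2") (auto simp: sadd_def uv(3,4))
      qed
      thus "x \<in> ssum p (Ysp n p 2 \<inter> Tsp n p) (Ysp n p 3)" unfolding ssum_def using uv(1,2) by blast
    qed
  next
    assume h: "even n \<and> p = 2"
    define m where "m = n div 2"
    show "rad n p \<subseteq> ssum p (span_p p {Bbar p [n div 2, n div 2]}) (ssum p (Ysp n p 2 \<inter> Tsp n p) (Ysp n p 3))"
    proof
      fix x assume xr: "x \<in> rad n p"
      obtain u v where uv: "u \<in> Ysp n p 2 \<inter> Tsp n p" "v \<in> Ysp n p 3"
        "u = (\<lambda>s. if length s = 2 \<and> s!0 \<noteq> s!1 then x s else 0)"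
        "v = (\<lambda>s. if 3 \<le> length s then x s else 0)" using main[OF xr] by blast
      define w where "w = lincomb p (\<lambda>_. x [m,m]) {Bbar p [m,m]}"
      have wsp: "w \<in> span_p p {Bbar p [n div 2, n div 2]}" unfolding span_p_def w_def m_def by blast
      have wv: "w s = (if s = [m,m] then x s else 0)" for s
        using xrange[OF xr, of s] by (auto simp: w_def lincomb_def Bbar_eval[OF p])
      have "sadd p w (sadd p u v) = x"
      proof
        fix s
        have "x s = 0" if l2: "length s = 2" and e01: "s!0 = s!1" and nm: "s \<noteq> [m,m]"
        proof -
          obtain c d where s: "s = [c,d]" using len2 l2 by blast
          hence s: "s = [c,c]" using e01 by simp
          hence "c \<noteq> m" using nm by simp
          thus "x s = 0" using eq2[OF xr s] m_def by auto
        qed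
        moreover have "\<not> 3 \<le> length s \<Longrightarrow> length s = 2 \<or> length s < 2" by arith
        ultimately show "sadd p w (sadd p u v) s = x s" using xrange[OF xr, of s] low[OF xr, of s]
          by (cases "length s = 2") (auto simp: sadd_def uv(3,4) wv)
      qed
      moreover have "sadd p u v \<in> ssum p (Ysp n p 2 \<inter> Tsp n p) (Ysp n p 3)"
        unfolding ssum_def using uv(1,2) by blast
      ultimately show "x \<in> ssum p (span_p p {Bbar p [n div 2, n div 2]}) (ssum p (Ysp n p 2 \<inter> Tsp n p) (Ysp n p 3))"
        unfolding ssum_def using wsp by blast
    qed
  qed
qed

end
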